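(* If $H=(S_0,e_0,S_1,e_1,\dots)$ is a history sequence of the Simpler Lazy Set algorithm, then the structure $M_H$ (with $\gamma$ as defined in the context) satisfies the Lazy Set axioms A0, A1, A2.
   Context: Simpler Lazy Set algorithm. Fix a countably infinite set $A$ of addresses with distinguished $\mathsf H,\mathsf T$; $\mathrm{Number}=\mathbb N\cup\{-1,\infty\}$. A state $S$: set $\mathrm{Active}^S\subseteq A$, $\mathrm{Next}^S:\mathrm{Active}^S\setminus\{\mathsf T\}\to A$, $\mathrm{Val}^S:\mathrm{Active}^S\to\mathrm{Number}$, and for each process $p$: $PC_p\in\{0,1,2,3.1,\dots,3.5\}$, $x_p\in\mathbb N$, $\mathrm{curr}_p\in A$, $\mathrm{status}_p$. $S$ is normal if $\mathrm{Active}^S$ is finite, $\mathsf H,\mathsf T$ are active with values $-1,\infty$, other active addresses have values in $\mathbb N$, and for active $a\neq\mathsf T$, $\mathrm{Next}(a)$ is active with $\mathrm{Val}(a)<\mathrm{Val}(\mathrm{Next}(a))$. The main branch is the path of $\mathrm{Next}$-links from $\mathsf H$ to $\mathsf T$. Initial state: $\mathrm{Active}=\{\mathsf H,\mathsf T\}$, $\mathrm{Next}(\mathsf H)=\mathsf T$, all $PC_p=0$. Steps $(S,e,T)$ of a process $p$ on a normal $S$: (i) invocation: $PC_p$ from $0$ to $1$, $2$ or $3.1$, with $x_p\in\mathbb N$ arbitrary; (ii) failure: $PC_p$ from $1$ or $2$ to $0$ with $\chi(e)=f$, nothing else changes; (iii) $\mathrm{AD}(x)$ ($x=x_p$, $PC_p$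 from $1$ to $0$): with $\mathfrak p$ the main-branch address having $\mathrm{Val}(\mathfrak p)<x\le\mathrm{Val}(\mathrm{Next}(\mathfrak p))$: if $\mathrm{Val}(\mathrm{Next}(\mathfrak p))=x$, no other change, $\chi(e)=1$, $\mathrm{adr}(e)=\mathrm{Next}^S(\mathfrak p)$; else a new address $a\notin\mathrm{Active}^S$ is made active with $\mathrm{Val}(a)=x$, $\mathrm{Next}^T(\mathfrak p)=a$, $\mathrm{Next}^T(a)=\mathrm{Next}^S(\mathfrak p)$, $\chi(e)=0$, $\mathrm{adr}(e)=a$; (iv) $\mathrm{RM}(x)$ ($PC_p$ from $2$ to $0$): if the main branch has an address $cu$ of value $x$, with $pred$ its main-branch predecessor, set $\mathrm{Next}^T(pred)=\mathrm{Next}^S(cu)$, $\chi(e)=1$, $\mathrm{adr}(e)=cu$; else no change, $\chi(e)=0$; (v) CONTAINS$(x)$ lines, each an atomic step: 3.1 $\mathrm{curr}_p:=\mathsf H$; 3.2/3.3 $\mathrm{curr}_p:=\mathrm{Next}(\mathrm{curr}_p)$; 3.4 if $\mathrm{Val}(\mathrm{curr}_p)\ge x$ go to 3.5 else to 3.3; 3.5 return $1$ if $\mathrm{Val}(\mathrm{curr}_p)=x$ else $0$, $PC_p:=0$. A history sequence is $(S_0,e_0,S_1,\dots)$ with $S_0$ initial and each $(S_i,e_i,S_{i+1})$ a step of some process. Every active address $a\notin\{\mathsf H,\mathsf T\}$ has a unique activating step $\mathrm{activation}(a)$: the $\mathrm{AD}$ action $e_i$ with $\chi(e_i)=0$ and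 $\mathrm{adr}(e_i)=a$. Structure $M_H$: its actions are the $e_i$, ordered by $e_i<e_j$ iff $i<j$; its high-level events are the CONTAINS$(x)$ operation executions $E$ (the set of actions of one process executing one CONTAINS protocol), with $\mathrm{Begin}(E)$ its first action (line 3.1) and $\mathrm{End}(E)$ its last (return) action; $\mathrm{Begin}(e)=\mathrm{End}(e)=e$ for actions; for events $X<Y$ iff $\mathrm{End}(X)<\mathrm{Begin}(Y)$. $\mathrm{Add}(e)$ iff $e$ is an $\mathrm{AD}$ action (including failures at line 1), $\mathrm{Rem}(e)$ iff $e$ is an $\mathrm{RM}$ action (including failures at line 2), $\mathrm{Cnt}(E)$ iff $E$ is a CONTAINS execution; $\mathrm{val}$ is the parameter $x$ and $\chi$ the returned status. $\gamma$: for an $\mathrm{AD}$ or $\mathrm{RM}$ action $e$ with $\chi(e)=1$, $\gamma(e)=\mathrm{activation}(\mathrm{adr}(e))$; for a CONTAINS execution $E$ with $\chi(E)=1$, whose variable $\mathrm{curr}$ takes final value $a_m$ (an active address of value $x$), $\gamma(E)=\mathrm{activation}(a_m)$. Notation: $\mathrm{Add}^p(a)$ abbreviates $\mathrm{Add}(a)\wedge\chi(a)=p$, similarly $\mathrm{Rem}^p,\mathrm{Cnt}^p$; $\mathrm{Op}^p(a)$ abbreviates $(\mathrm{Add}(a)\vee\mathrm{Rem}(a)\vee\mathrm{Cnt}(a))\wedge\chi(a)=p$, $p\in\{0,1\}$. A0: $\mathrm{Add},\mathrm{Rem},\mathrm{Cnt}$ pairwise disjoint; $\mathrm{Add},\mathrm{Rem}$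 events are actions, $\mathrm{Cnt}$ events high-level; $\mathrm{Begin}(X),\mathrm{End}(X)$ are actions; $\mathrm{Begin}(E)<\mathrm{End}(E)$ for $\mathrm{Cnt}$ events; $<$ is linear on actions. A1: for every $A$ with $\mathrm{Op}^1(A)$: $\mathrm{Add}^0(\gamma(A))$, $\mathrm{val}(\gamma(A))=\mathrm{val}(A)$, $\gamma(A)<\mathrm{End}(A)$, and no $R$ has $\mathrm{Rem}^1(R)$, $\gamma(R)=\gamma(A)$, $\gamma(A)<R<A$. A2: if $\mathrm{Op}^0(B)$, $\mathrm{Add}^0(A)$, $A<B$, $\mathrm{val}(A)=\mathrm{val}(B)$, then some $R$ has $\mathrm{Rem}^1(R)$, $A=\gamma(R)$, $R<\mathrm{End}(B)$. *)

theory Defs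
  imports Main "HOL-Library.Countable_Set" "HOL-Library.Extended_Nat"
begin

datatype lnum = MinusOne | Num nat | Infty

fun nless :: "lnum \<Rightarrow> lnum \<Rightarrow> bool" where
  "nless MinusOne y = (y \<noteq> MinusOne)"
| "nless (Num a) (Num b) = (a < b)"
| "nless (Num a) Infty = True"
| "nless (Num a) MinusOne = False"
| "nless Infty y = False"

definition nle :: "lnum \<Rightarrow> lnum \<Rightarrow> bool" where
  "nle x y \<longleftrightarrow> nless x y \<or> x = y"

text \<open>Returned status: 0, 1 or f (failure).\<close>
datatype chi = C0 | C1 | CF

datatype pcv = P0 | P1 | P2 | P31 | P32 | P33 | P34 | P35

record ('a, 'p) st =
  Active :: "'a set"
  Nxt    :: "'a \<Rightarrow> 'a"      \<comment> \<open>only meaningful on Active - {T}\<close>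
  Val    :: "'a \<Rightarrow> lnum"    \<comment> \<open>only meaningful on Active\<close>
  PC     :: "'p \<Rightarrow> pcv"
  Xp     :: "'p \<Rightarrow> nat"
  Curr   :: "'p \<Rightarrow> 'a"
  Status :: "'p \<Rightarrow> chi"

text \<open>Kinds of actions.  KAdd: the atomic step at line 1 (either AD(x) or failure);
  KRem: the atomic step at line 2 (either RM(x) or failure); KInv: invocation;
  KL31..KL35: the lines of CONTAINS.\<close>
datatype kind = KInv | KAdd | KRem | KL31 | KL32 | KL33 | KL34 | KL35

record ('a, 'p) label =
  eproc :: 'p
  ekind :: kind
  echi  :: chi
  eadr  :: 'a

definition normal :: "'a \<Rightarrow> 'a \<Rightarrow> ('a, 'p) st \<Rightarrow> bool" where
  "normal Hd Tl S \<longleftrightarrow>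
     finite (Active S) \<and> Hd \<in> Active S \<and> Tl \<in> Active S \<and>
     Val S Hd = MinusOne \<and> Val S Tl = Infty \<and>
     (\<forall>a \<in> Active S - {Hd, Tl}. \<exists>k. Val S a = Num k) \<and>
     (\<forall>a \<in> Active S - {Tl}. Nxt S a \<in> Active S \<and> nless (Val S a) (Val S (Nxt S a)))"

definition on_main :: "'a \<Rightarrow> 'a \<Rightarrow> ('a, 'p) st \<Rightarrow> 'a \<Rightarrow> bool" where
  "on_main Hd Tl S a \<longleftrightarrow>
     (\<exists>m. (Nxt S ^^ m) Hd = a \<and> (\<forall>k<m. (Nxt S ^^ k) Hd \<noteq> Tl))"

definition init_state :: "'a \<Rightarrow> 'a \<Rightarrow> ('a, 'p) st \<Rightarrow> bool" where
  "init_state Hd Tl S \<longleftrightarrow>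
     Active S = {Hd, Tl} \<and> Nxt S Hd = Tl \<and> Val S Hd = MinusOne \<and> Val S Tl = Infty \<and>
     (\<forall>p. PC S p = P0)"

definition step :: "'a \<Rightarrow> 'a \<Rightarrow> ('a, 'p) st \<Rightarrow> ('a, 'p) label \<Rightarrow> ('a, 'p) st \<Rightarrow> bool" where
  "step Hd Tl S e S' \<longleftrightarrow> normal Hd Tl S \<and>
    (let p = eproc e; x = Xp S p; st' = (\<lambda>c. (Status S)(p := c)) in
     case ekind e of
       KInv \<Rightarrow> PC S p = P0 \<and>
          (\<exists>pc' x'. pc' \<in> {P1, P2, P31} \<and>
             S' = S\<lparr>PC := (PC S)(p := pc'), Xp := (Xp S)(p := x')\<rparr>)
     | KAdd \<Rightarrow> PC S p = P1 \<and>
          ((echi e = CF \<and> S' = S\<lparr>PC := (PC S)(p := P0), Status := st' CF\<rparr>) \<or>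
           (\<exists>pp. on_main Hd Tl S pp \<and> pp \<noteq> Tl \<and>
              nless (Val S pp) (Num x) \<and> nle (Num x) (Val S (Nxt S pp)) \<and>
              ((Val S (Nxt S pp) = Num x \<and> echi e = C1 \<and> eadr e = Nxt S pp \<and>
                S' = S\<lparr>PC := (PC S)(p := P0), Status := st' C1\<rparr>) \<or>
               (Val S (Nxt S pp) \<noteq> Num x \<and> echi e = C0 \<and> eadr e \<notin> Active S \<and>
                S' = S\<lparr>Active := insert (eadr e) (Active S),
                       Nxt := (Nxt S)(pp := eadr e, eadr e := Nxt S pp),
                       Val := (Val S)(eadr e := Num x),
                       PC := (PC S)(p := P0), Status := st' C0\<rparr>))))
     | KRem \<Rightarrow> PC S p = P2 \<and>
          ((echi e = CF \<and> S' = S\<lparr>PC := (PC S)(p := P0), Status := st' CF\<rparr>) \<or>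
           (\<exists>cu pred. on_main Hd Tl S cu \<and> Val S cu = Num x \<and>
              on_main Hd Tl S pred \<and> pred \<noteq> Tl \<and> Nxt S pred = cu \<and>
              echi e = C1 \<and> eadr e = cu \<and>
              S' = S\<lparr>Nxt := (Nxt S)(pred := Nxt S cu),
                     PC := (PC S)(p := P0), Status := st' C1\<rparr>) \<or>
           ((\<nexists>cu. on_main Hd Tl S cu \<and> Val S cu = Num x) \<and> echi e = C0 \<and>
              S' = S\<lparr>PC := (PC S)(p := P0), Status := st' C0\<rparr>))
     | KL31 \<Rightarrow> PC S p = P31 \<and>
          S' = S\<lparr>Curr := (Curr S)(p := Hd), PC := (PC S)(p := P32)\<rparr>
     | KL32 \<Rightarrow> PC S p = P32 \<and>
          S' = S\<lparr>Curr := (Curr S)(p := Nxt S (Curr S p)), PC := (PC S)(p := P34)\<rparr>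
     | KL33 \<Rightarrow> PC S p = P33 \<and>
          S' = S\<lparr>Curr := (Curr S)(p := Nxt S (Curr S p)), PC := (PC S)(p := P34)\<rparr>
     | KL34 \<Rightarrow> PC S p = P34 \<and>
          S' = S\<lparr>PC := (PC S)(p := (if nle (Num x) (Val S (Curr S p)) then P35 else P33))\<rparr>
     | KL35 \<Rightarrow> PC S p = P35 \<and>
          echi e = (if Val S (Curr S p) = Num x then C1 else C0) \<and>
          S' = S\<lparr>PC := (PC S)(p := P0), Status := st' (echi e)\<rparr>)"

text \<open>A history sequence (S_0, e_0, S_1, e_1, ...) with n actions (n = \<infinity> for infinite histories).\<close>
definition history :: "'a \<Rightarrow> 'a \<Rightarrow> (nat \<Rightarrow> ('a, 'p) st) \<Rightarrow> (nat \<Rightarrow> ('a, 'p) label) \<Rightarrow> enat \<Rightarrow> bool" where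
  "history Hd Tl S e n \<longleftrightarrow> init_state Hd Tl (S 0) \<and>
     (\<forall>i. enat i < n \<longrightarrow> step Hd Tl (S i) (e i) (S (Suc i)))"

record 'e lsstruct =
  Ev      :: "'e set"      \<comment> \<open>all events (actions and high-level events)\<close>
  Actions :: "'e set"
  lt      :: "'e \<Rightarrow> 'e \<Rightarrow> bool"
  Begin   :: "'e \<Rightarrow> 'e"
  End     :: "'e \<Rightarrow> 'e"
  IsAdd   :: "'e \<Rightarrow> bool"
  IsRem   :: "'e \<Rightarrow> bool"
  IsCnt   :: "'e \<Rightarrow> bool"
  val     :: "'e \<Rightarrow> nat"
  chi     :: "'e \<Rightarrow> chi"
  gamma   :: "'e \<Rightarrow> 'e"

definition evless :: "'e lsstruct \<Rightarrow> 'e \<Rightarrow> 'e \<Rightarrow> bool" where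
  "evless M X Y \<longleftrightarrow> lt M (End M X) (Begin M Y)"

definition Op :: "'e lsstruct \<Rightarrow> chi \<Rightarrow> 'e \<Rightarrow> bool" where
  "Op M c A \<longleftrightarrow> (IsAdd M A \<or> IsRem M A \<or> IsCnt M A) \<and> chi M A = c"

definition A0 :: "'e lsstruct \<Rightarrow> bool" where
  "A0 M \<longleftrightarrow>
     Actions M \<subseteq> Ev M \<and>
     (\<forall>X\<in>Ev M. \<not> (IsAdd M X \<and> IsRem M X) \<and> \<not> (IsAdd M X \<and> IsCnt M X) \<and>
                 \<not> (IsRem M X \<and> IsCnt M X)) \<and>
     (\<forall>X\<in>Ev M. (IsAdd M X \<or> IsRem M X) \<longrightarrow> X \<in> Actions M) \<and>
     (\<forall>X\<in>Ev M. IsCnt M X \<longrightarrow> X \<notin> Actions M) \<and>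
     (\<forall>X\<in>Ev M. Begin M X \<in> Actions M \<and> End M X \<in> Actions M) \<and>
     (\<forall>E\<in>Ev M. IsCnt M E \<longrightarrow> lt M (Begin M E) (End M E)) \<and>
     (\<forall>a\<in>Actions M. \<not> lt M a a) \<and>
     (\<forall>a\<in>Actions M. \<forall>b\<in>Actions M. \<forall>c\<in>Actions M. lt M a b \<longrightarrow> lt M b c \<longrightarrow> lt M a c) \<and>
     (\<forall>a\<in>Actions M. \<forall>b\<in>Actions M. lt M a b \<or> a = b \<or> lt M b a)"

definition A1 :: "'e lsstruct \<Rightarrow> bool" where
  "A1 M \<longleftrightarrow>
     (\<forall>A\<in>Ev M. Op M C1 A \<longrightarrow>
        gamma M A \<in> Ev M \<and> IsAdd M (gamma M A) \<and> chi M (gamma M A) = C0 \<and>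
        val M (gamma M A) = val M A \<and> evless M (gamma M A) (End M A) \<and>
        \<not> (\<exists>R\<in>Ev M. IsRem M R \<and> chi M R = C1 \<and> gamma M R = gamma M A \<and>
                      evless M (gamma M A) R \<and> evless M R A))"

definition A2 :: "'e lsstruct \<Rightarrow> bool" where
  "A2 M \<longleftrightarrow>
     (\<forall>B\<in>Ev M. \<forall>A\<in>Ev M.
        Op M C0 B \<and> IsAdd M A \<and> chi M A = C0 \<and> evless M A B \<and> val M A = val M B \<longrightarrow>
        (\<exists>R\<in>Ev M. IsRem M R \<and> chi M R = C1 \<and> gamma M R = A \<and> evless M R (End M B)))"

text \<open>Events of M_H: the action e_i (Act i), and CONTAINS executions (CntEx b r)
  given by the index b of its first action (line 3.1) and r of its return action (line 3.5).\<close>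
datatype hev = Act nat | CntEx nat nat

definition is_cnt_exec :: "(nat \<Rightarrow> ('a, 'p) label) \<Rightarrow> enat \<Rightarrow> nat \<Rightarrow> nat \<Rightarrow> bool" where
  "is_cnt_exec e n b r \<longleftrightarrow> b < r \<and> enat r < n \<and>
     ekind (e b) = KL31 \<and> ekind (e r) = KL35 \<and> eproc (e r) = eproc (e b) \<and>
     (\<forall>j. b < j \<and> j < r \<and> eproc (e j) = eproc (e b) \<longrightarrow> ekind (e j) \<in> {KL32, KL33, KL34})"

definition activation :: "(nat \<Rightarrow> ('a, 'p) label) \<Rightarrow> enat \<Rightarrow> 'a \<Rightarrow> hev" where
  "activation e n a =
     Act (THE i. enat i < n \<and> ekind (e i) = KAdd \<and> echi (e i) = C0 \<and> eadr (e i) = a)"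

fun hBegin :: "hev \<Rightarrow> hev" where
  "hBegin (Act i) = Act i"
| "hBegin (CntEx b r) = Act b"

fun hEnd :: "hev \<Rightarrow> hev" where
  "hEnd (Act i) = Act i"
| "hEnd (CntEx b r) = Act r"

fun hlt :: "hev \<Rightarrow> hev \<Rightarrow> bool" where
  "hlt (Act i) (Act j) = (i < j)"
| "hlt _ _ = False"

fun hAdd :: "(nat \<Rightarrow> ('a, 'p) label) \<Rightarrow> hev \<Rightarrow> bool" where
  "hAdd e (Act i) = (ekind (e i) = KAdd)"
| "hAdd e (CntEx b r) = False"

fun hRem :: "(nat \<Rightarrow> ('a, 'p) label) \<Rightarrow> hev \<Rightarrow> bool" where
  "hRem e (Act i) = (ekind (e i) = KRem)"
| "hRem e (CntEx b r) = False"

fun hCnt :: "hev \<Rightarrow> bool" where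
  "hCnt (Act i) = False"
| "hCnt (CntEx b r) = True"

fun hval :: "(nat \<Rightarrow> ('a, 'p) st) \<Rightarrow> (nat \<Rightarrow> ('a, 'p) label) \<Rightarrow> hev \<Rightarrow> nat" where
  "hval S e (Act i) = Xp (S i) (eproc (e i))"
| "hval S e (CntEx b r) = Xp (S b) (eproc (e b))"

fun hchi :: "(nat \<Rightarrow> ('a, 'p) label) \<Rightarrow> hev \<Rightarrow> chi" where
  "hchi e (Act i) = echi (e i)"
| "hchi e (CntEx b r) = echi (e r)"

text \<open>gamma: for AD/RM actions, activation of their address; for a CONTAINS execution,
  activation of the final value of curr (its value in the state in which the return
  action is executed).  Other values are irrelevant for the axioms.\<close>
fun hgamma :: "(nat \<Rightarrow> ('a, 'p) st) \<Rightarrow> (nat \<Rightarrow> ('a, 'p) label) \<Rightarrow> enat \<Rightarrow> hev \<Rightarrow> hev" where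
  "hgamma S e n (Act i) = activation e n (eadr (e i))"
| "hgamma S e n (CntEx b r) = activation e n (Curr (S r) (eproc (e r)))"

definition MH :: "(nat \<Rightarrow> ('a, 'p) st) \<Rightarrow> (nat \<Rightarrow> ('a, 'p) label) \<Rightarrow> enat \<Rightarrow> hev lsstruct" where
  "MH S e n =
    \<lparr> Ev = {Act i | i. enat i < n} \<union> {CntEx b r | b r. is_cnt_exec e n b r},
      Actions = {Act i | i. enat i < n},
      lt = hlt, Begin = hBegin, End = hEnd,
      IsAdd = hAdd e, IsRem = hRem e, IsCnt = hCnt,
      val = hval S e, chi = hchi e, gamma = hgamma S e n \<rparr>"

end

theory Submission
  imports Defs
begin


lemma nless_irrefl[simp]: "\<not> nless x x"
  by (cases x) auto

lemma nless_trans: "nless x y \<Longrightarrow> nless y z \<Longrightarrow> nless x z"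
  by (cases x; cases y; cases z) auto

lemma nless_asym: "nless x y \<Longrightarrow> \<not> nless y x"
  by (cases x; cases y) auto

lemma nless_total: "nless x y \<or> x = y \<or> nless y x"
  by (cases x; cases y) auto

lemma nle_refl[simp]: "nle x x" by (simp add: nle_def)

lemma nle_trans: "nle x y \<Longrightarrow> nle y z \<Longrightarrow> nle x z"
  unfolding nle_def using nless_trans by blast

lemma nle_less_trans: "nle x y \<Longrightarrow> nless y z \<Longrightarrow> nless x z"
  unfolding nle_def using nless_trans by blast

lemma less_nle_trans: "nless x y \<Longrightarrow> nle y z \<Longrightarrow> nless x z"
  unfolding nle_def using nless_trans by blast

lemma nle_antisym: "nle x y \<Longrightarrow> nle y x \<Longrightarrow> x = y"
  unfolding nle_def using nless_asym by blast

lemma not_nle: "\<not> nle x y \<Longrightarrow> nless y x"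
  unfolding nle_def using nless_total by blast

lemma nle_not_less: "nle x y \<Longrightarrow> \<not> nless y x"
  unfolding nle_def using nless_asym by auto

lemma Infty_not_less[simp]: "\<not> nless Infty y" by simp

inductive rf :: "'a \<Rightarrow> ('a \<Rightarrow> 'a) \<Rightarrow> 'a \<Rightarrow> 'a \<Rightarrow> bool" for Tl f u where
  rf_refl: "rf Tl f u u"
| rf_step: "rf Tl f u c \<Longrightarrow> c \<noteq> Tl \<Longrightarrow> rf Tl f u (f c)"

lemma rf_inv: "rf Tl f u v \<Longrightarrow> v = u \<or> (u \<noteq> Tl \<and> rf Tl f (f u) v)"
  by (induction rule: rf.induct) (auto intro: rf.intros)

lemma rf_trans: "rf Tl f v w \<Longrightarrow> rf Tl f u v \<Longrightarrow> rf Tl f u w"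
  by (induction rule: rf.induct) (auto intro: rf.intros)

lemma rf_chain: "rf Tl f h c \<Longrightarrow> rf Tl f h a \<Longrightarrow> rf Tl f c a \<or> rf Tl f a c"
proof (induction rule: rf.induct)
  case (rf_refl)
  then show ?case by simp
next
  case (rf_step c)
  then have "rf Tl f c a \<or> rf Tl f a c" by simp
  then show ?case
  proof
    assume "rf Tl f c a"
    from rf_inv[OF this] show ?thesis
      using rf_step.hyps by (auto intro: rf.intros)
  next
    assume "rf Tl f a c"
    then show ?thesis using rf_step.hyps by (auto intro: rf.intros)
  qed
qed

lemma on_main_rf: "on_main Hd Tl S a \<longleftrightarrow> rf Tl (Nxt S) Hd a"
proof
  assume "on_main Hd Tl S a"
  then obtain m where m: "(Nxt S ^^ m) Hd = a" "\<forall>k<m. (Nxt S ^^ k) Hd \<noteq> Tl"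
    unfolding on_main_def by blast
  have "\<forall>k<m. (Nxt S ^^ k) Hd \<noteq> Tl \<Longrightarrow> rf Tl (Nxt S) Hd ((Nxt S ^^ m) Hd)" for m
    by (induction m) (auto intro: rf.intros)
  with m show "rf Tl (Nxt S) Hd a" by blast
next
  assume "rf Tl (Nxt S) Hd a"
  then show "on_main Hd Tl S a"
  proof (induction rule: rf.induct)
    case rf_refl
    then show ?case unfolding on_main_def by (intro exI[of _ 0]) auto
  next
    case (rf_step c)
    then obtain m where m: "(Nxt S ^^ m) Hd = c" "\<forall>k<m. (Nxt S ^^ k) Hd \<noteq> Tl"
      unfolding on_main_def by blast
    show ?case unfolding on_main_def
      apply (intro exI[of _ "Suc m"])
      using m rf_step.hyps(2) less_Suc_eq by auto
  qed
qed

context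
  fixes Hd Tl :: 'a and S :: "('a,'p) st"
  assumes nS: "normal Hd Tl S" and HT: "Hd \<noteq> Tl"
begin

lemma nS_facts: "finite (Active S)" "Hd \<in> Active S" "Tl \<in> Active S"
  "Val S Hd = MinusOne" "Val S Tl = Infty"
  "\<And>a. a \<in> Active S \<Longrightarrow> a \<noteq> Hd \<Longrightarrow> a \<noteq> Tl \<Longrightarrow> \<exists>k. Val S a = Num k"
  "\<And>a. a \<in> Active S \<Longrightarrow> a \<noteq> Tl \<Longrightarrow> Nxt S a \<in> Active S"
  "\<And>a. a \<in> Active S \<Longrightarrow> a \<noteq> Tl \<Longrightarrow> nless (Val S a) (Val S (Nxt S a))"
  using nS unfolding normal_def by auto

lemma rf_active: "rf Tl (Nxt S) u a \<Longrightarrow> u \<in> Active S \<Longrightarrow> a \<in> Active S"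
  by (induction rule: rf.induct) (auto simp: nS_facts)

lemma rf_mono: "rf Tl (Nxt S) u v \<Longrightarrow> u \<in> Active S \<Longrightarrow> nle (Val S u) (Val S v)"
proof (induction rule: rf.induct)
  case rf_refl then show ?case by simp
next
  case (rf_step c)
  have "c \<in> Active S" using rf_active rf_step by blast
  then have "nless (Val S c) (Val S (Nxt S c))" using nS_facts(8) rf_step by blast
  then show ?case using rf_step nle_trans unfolding nle_def by blast
qed

lemma main_active: "rf Tl (Nxt S) Hd a \<Longrightarrow> a \<in> Active S"
  using rf_active nS_facts(2) by blast

lemma sorted_main:
  assumes "rf Tl (Nxt S) Hd c" "rf Tl (Nxt S) Hd a" "c \<noteq> Tl" "nless (Val S c) (Val S a)"
  shows "nle (Val S (Nxt S c)) (Val S a)"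
proof -
  have cA: "c \<in> Active S" "a \<in> Active S" using assms main_active by auto
  from rf_chain[OF assms(1,2)] show ?thesis
  proof
    assume "rf Tl (Nxt S) c a"
    from rf_inv[OF this] show ?thesis
    proof
      assume "a = c" then show ?thesis using assms by simp
    next
      assume "c \<noteq> Tl \<and> rf Tl (Nxt S) (Nxt S c) a"
      then show ?thesis using rf_mono nS_facts(7) cA by blast
    qed
  next
    assume "rf Tl (Nxt S) a c"
    then have "nle (Val S a) (Val S c)" using rf_mono cA by blast
    then show ?thesis using assms nle_not_less by blast
  qed
qed

lemma main_distinct_vals:
  assumes "rf Tl (Nxt S) Hd c" "rf Tl (Nxt S) Hd a" "c \<noteq> a"
  shows "nless (Val S c) (Val S a) \<or> nless (Val S a) (Val S c)"
proof -
  have cA: "c \<in> Active S" "a \<in> Active S" using assms main_active by auto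
  have *: "nless (Val S x) (Val S y)" if "rf Tl (Nxt S) x y" "x \<noteq> y" "x \<in> Active S" for x y
  proof -
    from rf_inv[OF that(1)] that have "x \<noteq> Tl" "rf Tl (Nxt S) (Nxt S x) y" by auto
    then show ?thesis using rf_mono nS_facts(7,8) that(3) less_nle_trans by blast
  qed
  from rf_chain[OF assms(1,2)] show ?thesis using * cA assms(3) by metis
qed

lemma unique_pred:
  assumes "rf Tl (Nxt S) Hd c" "c \<noteq> Tl" "rf Tl (Nxt S) Hd pr" "pr \<noteq> Tl" "Nxt S c = Nxt S pr"
  shows "c = pr"
proof (rule ccontr)
  assume ne: "c \<noteq> pr"
  have cA: "c \<in> Active S" "pr \<in> Active S" using assms main_active by auto
  from main_distinct_vals[OF assms(1,3) ne] show False
  proof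
    assume "nless (Val S c) (Val S pr)"
    then have "nle (Val S (Nxt S c)) (Val S pr)" using sorted_main assms by blast
    moreover have "nless (Val S pr) (Val S (Nxt S pr))" using nS_facts(8) cA assms by blast
    ultimately show False using assms(5) nle_not_less by auto
  next
    assume "nless (Val S pr) (Val S c)"
    then have "nle (Val S (Nxt S pr)) (Val S c)" using sorted_main assms by blast
    moreover have "nless (Val S c) (Val S (Nxt S c))" using nS_facts(8) cA assms by blast
    ultimately show False using assms(5) nle_not_less by auto
  qed
qed

lemma insert_main:
  assumes pp: "rf Tl (Nxt S) Hd pp" "pp \<noteq> Tl" and a: "a \<notin> Active S"
  shows "rf Tl ((Nxt S)(pp := a, a := Nxt S pp)) Hd v \<longleftrightarrow> rf Tl (Nxt S) Hd v \<or> v = a"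
proof -
  let ?f = "(Nxt S)(pp := a, a := Nxt S pp)"
  have ppA: "pp \<in> Active S" using pp main_active by blast
  have aT: "a \<noteq> Tl" "a \<noteq> pp" using a nS_facts(3) ppA by auto
  have old: "rf Tl ?f Hd v" if "rf Tl (Nxt S) Hd v" for v
    using that
  proof (induction rule: rf.induct)
    case rf_refl then show ?case by (rule rf.intros)
  next
    case (rf_step c)
    have cA: "c \<noteq> a" using rf_step main_active a by blast
    show ?case
    proof (cases "c = pp")
      case True
      then have "rf Tl ?f Hd (?f c)" using rf_step by (blast intro: rf.intros)
      moreover have "?f c = a" using True aT by simp
      ultimately have "rf Tl ?f Hd a" by simp
      then have "rf Tl ?f Hd (?f a)" using aT by (blast intro: rf.intros)
      then show ?thesis using True by (metis fun_upd_same)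
    next
      case False
      then have "rf Tl ?f Hd (?f c)" using rf_step by (blast intro: rf.intros)
      then show ?thesis using False cA by (metis fun_upd_other)
    qed
  qed
  have new: "rf Tl (Nxt S) Hd v \<or> v = a" if "rf Tl ?f Hd v" for v
    using that
  proof (induction rule: rf.induct)
    case rf_refl then show ?case by (blast intro: rf.intros)
  next
    case (rf_step c)
    show ?case
    proof (cases "c = a")
      case True
      then show ?thesis using aT pp by (auto intro: rf.intros)
    next
      case False
      then show ?thesis using rf_step by (cases "c = pp") (auto intro: rf.intros)
    qed
  qed
  have "rf Tl ?f Hd a"
  proof -
    have "rf Tl ?f Hd pp" using old pp by blast
    then have "rf Tl ?f Hd (?f pp)" using pp by (blast intro: rf.intros)
    then show ?thesis using aT by simp
  qed
  then show ?thesis using old new by blast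
qed

lemma remove_main:
  assumes pr: "rf Tl (Nxt S) Hd pr" "pr \<noteq> Tl" and cu: "Nxt S pr = cu" "cu \<noteq> Tl"
  shows "rf Tl ((Nxt S)(pr := Nxt S cu)) Hd v \<longleftrightarrow> rf Tl (Nxt S) Hd v \<and> v \<noteq> cu"
proof -
  let ?f = "(Nxt S)(pr := Nxt S cu)"
  have prA: "pr \<in> Active S" using pr main_active by blast
  have cuA: "cu \<in> Active S" using nS_facts(7) prA pr cu by blast
  have cum: "rf Tl (Nxt S) Hd cu" using pr cu by (blast intro: rf.intros)
  have prcu: "nless (Val S pr) (Val S cu)" using nS_facts(8) prA pr cu by blast
  then have prncu: "pr \<noteq> cu" by auto
  have cuHd: "cu \<noteq> Hd"
  proof
    assume "cu = Hd"
    then show False using prcu nS_facts(4) by (cases "Val S pr") auto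
  qed
  have ncu: "Nxt S cu \<noteq> cu" using nS_facts(8)[OF cuA cu(2)] by auto
  have up: "c = pr" if "rf Tl (Nxt S) Hd c" "c \<noteq> Tl" "Nxt S c = cu" for c
    using unique_pred[OF that(1,2) pr] that cu by simp
  have new: "rf Tl (Nxt S) Hd v \<and> v \<noteq> cu" if "rf Tl ?f Hd v" for v
    using that
  proof (induction rule: rf.induct)
    case rf_refl then show ?case using cuHd by (blast intro: rf.intros)
  next
    case (rf_step c)
    show ?case
    proof (cases "c = pr")
      case True
      then show ?thesis using cum cu ncu by (auto intro: rf.intros)
    next
      case False
      then show ?thesis using rf_step up by (auto intro: rf.intros)
    qed
  qed
  have old: "(v \<noteq> cu \<longrightarrow> rf Tl ?f Hd v) \<and> (v = cu \<longrightarrow> rf Tl ?f Hd pr)"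
    if "rf Tl (Nxt S) Hd v" for v
    using that
  proof (induction rule: rf.induct)
    case rf_refl then show ?case using cuHd by (blast intro: rf.intros)
  next
    case (rf_step c)
    show ?case
    proof (cases "Nxt S c = cu")
      case True
      then have "c = pr" using up rf_step by blast
      then show ?thesis using rf_step prncu True by auto
    next
      case False
      show ?thesis
      proof (cases "c = cu")
        case True
        then have "rf Tl ?f Hd pr" using rf_step.IH by blast
        then have "rf Tl ?f Hd (?f pr)" using pr by (blast intro: rf.intros)
        then show ?thesis using True False by (metis fun_upd_same)
      next
        case c: False
        then have "rf Tl ?f Hd c" using rf_step.IH by blast
        moreover have "c \<noteq> pr" using False cu by auto
        ultimately have "rf Tl ?f Hd (?f c)" using rf_step by (blast intro: rf.intros)
        then show ?thesis using False \<open>c \<noteq> pr\<close> by (metis fun_upd_other)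
      qed
    qed
  qed
  show ?thesis using old new by blast
qed

end


definition SI :: "'a \<Rightarrow> ('a,'p) st \<Rightarrow> bool" where
  "SI H T \<longleftrightarrow> (\<forall>p. (PC T p = P32 \<longrightarrow> Curr T p = H) \<and>
     (PC T p = P33 \<longrightarrow> Curr T p \<in> Active T \<and> nless (Val T (Curr T p)) (Num (Xp T p))) \<and>
     (PC T p = P34 \<longrightarrow> Curr T p \<in> Active T) \<and>
     (PC T p = P35 \<longrightarrow> Curr T p \<in> Active T \<and> nle (Num (Xp T p)) (Val T (Curr T p))))"


context
  fixes Hd Tl :: 'a and S S' :: "('a,'p) st" and e :: "('a,'p) label"
  assumes st: "step Hd Tl S e S'"
begin

lemma step_normal: "normal Hd Tl S"
  using st unfolding step_def by blast

lemma step_other: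
  assumes "\<not> (ekind e = KAdd \<and> echi e = C0)" "\<not> (ekind e = KRem \<and> echi e = C1)"
  shows "Nxt S' = Nxt S \<and> Active S' = Active S \<and> Val S' = Val S"
  using st assms by (cases "ekind e") (auto simp: step_def Let_def)

lemma step_ins:
  assumes "ekind e = KAdd" "echi e = C0"
  shows "\<exists>pp. rf Tl (Nxt S) Hd pp \<and> pp \<noteq> Tl \<and> eadr e \<notin> Active S \<and>
     nless (Val S pp) (Num (Xp S (eproc e))) \<and> nle (Num (Xp S (eproc e))) (Val S (Nxt S pp)) \<and>
     Val S (Nxt S pp) \<noteq> Num (Xp S (eproc e)) \<and>
     Nxt S' = (Nxt S)(pp := eadr e, eadr e := Nxt S pp) \<and>
     Active S' = insert (eadr e) (Active S) \<and> Val S' = (Val S)(eadr e := Num (Xp S (eproc e)))"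
  using st assms by (auto simp: step_def Let_def on_main_rf)

lemma step_addC1:
  assumes "ekind e = KAdd" "echi e = C1"
  shows "\<exists>pp. rf Tl (Nxt S) Hd pp \<and> pp \<noteq> Tl \<and> Val S (Nxt S pp) = Num (Xp S (eproc e)) \<and>
     eadr e = Nxt S pp"
  using st assms by (auto simp: step_def Let_def on_main_rf)

lemma step_rem:
  assumes "ekind e = KRem" "echi e = C1"
  shows "\<exists>pr. rf Tl (Nxt S) Hd pr \<and> pr \<noteq> Tl \<and> Nxt S pr = eadr e \<and> rf Tl (Nxt S) Hd (eadr e) \<and>
     Val S (eadr e) = Num (Xp S (eproc e)) \<and> Nxt S' = (Nxt S)(pr := Nxt S (eadr e)) \<and>
     Active S' = Active S \<and> Val S' = Val S"
  using st assms by (auto simp: step_def Let_def on_main_rf)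

lemma step_remC0:
  assumes "ekind e = KRem" "echi e = C0"
  shows "\<not> (\<exists>cu. rf Tl (Nxt S) Hd cu \<and> Val S cu = Num (Xp S (eproc e)))"
  using st assms by (auto simp: step_def Let_def on_main_rf)

lemma step_frame:
  assumes "eproc e \<noteq> p"
  shows "PC S' p = PC S p \<and> Curr S' p = Curr S p \<and> Xp S' p = Xp S p"
  using st assms by (cases "ekind e") (auto simp: step_def Let_def)

lemma step_Xp: "ekind e \<noteq> KInv \<Longrightarrow> Xp S' = Xp S"
  using st by (cases "ekind e") (auto simp: step_def Let_def)

lemma step_Curr: "ekind e \<notin> {KL31, KL32, KL33} \<Longrightarrow> Curr S' = Curr S"
  using st by (cases "ekind e") (auto simp: step_def Let_def)

lemma step_KInv: "ekind e = KInv \<Longrightarrow> PC S (eproc e) = P0 \<and> PC S' (eproc e) \<in> {P1, P2, P31}"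
  using st by (auto simp: step_def Let_def)

lemma step_KAdd: "ekind e = KAdd \<Longrightarrow> PC S (eproc e) = P1 \<and> PC S' (eproc e) = P0"
  using st by (auto simp: step_def Let_def)

lemma step_KRem: "ekind e = KRem \<Longrightarrow> PC S (eproc e) = P2 \<and> PC S' (eproc e) = P0"
  using st by (auto simp: step_def Let_def)

lemma step_KL31: "ekind e = KL31 \<Longrightarrow> PC S (eproc e) = P31 \<and> PC S' (eproc e) = P32 \<and>
   Curr S' (eproc e) = Hd \<and> Nxt S' = Nxt S \<and> Active S' = Active S \<and> Val S' = Val S"
  using st by (auto simp: step_def Let_def)

lemma step_KL32: "ekind e = KL32 \<Longrightarrow> PC S (eproc e) = P32 \<and> PC S' (eproc e) = P34 \<and>
   Curr S' (eproc e) = Nxt S (Curr S (eproc e)) \<and> Nxt S' = Nxt S \<and> Active S' = Active S \<and> Val S' = Val S"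
  using st by (auto simp: step_def Let_def)

lemma step_KL33: "ekind e = KL33 \<Longrightarrow> PC S (eproc e) = P33 \<and> PC S' (eproc e) = P34 \<and>
   Curr S' (eproc e) = Nxt S (Curr S (eproc e)) \<and> Nxt S' = Nxt S \<and> Active S' = Active S \<and> Val S' = Val S"
  using st by (auto simp: step_def Let_def)

lemma step_KL34: "ekind e = KL34 \<Longrightarrow> PC S (eproc e) = P34 \<and>
   PC S' (eproc e) = (if nle (Num (Xp S (eproc e))) (Val S (Curr S (eproc e))) then P35 else P33) \<and>
   Nxt S' = Nxt S \<and> Active S' = Active S \<and> Val S' = Val S"
  using st by (auto simp: step_def Let_def)

lemma step_KL35: "ekind e = KL35 \<Longrightarrow> PC S (eproc e) = P35 \<and> PC S' (eproc e) = P0 \<and>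
   echi e = (if Val S (Curr S (eproc e)) = Num (Xp S (eproc e)) then C1 else C0)"
  using st by (auto simp: step_def Let_def)

lemma step_mono: "Active S \<subseteq> Active S' \<and> (\<forall>a\<in>Active S. Val S' a = Val S a)"
proof (cases "ekind e = KAdd \<and> echi e = C0")
  case True
  then show ?thesis using step_ins by fastforce
next
  case F: False
  show ?thesis
  proof (cases "ekind e = KRem \<and> echi e = C1")
    case True then show ?thesis using step_rem by fastforce
  next
    case False then show ?thesis using step_other F by simp
  qed
qed

end

lemma SI_step:
  assumes st: "step Hd Tl S e S'" and SI: "SI Hd S" and HT: "Hd \<noteq> Tl"
  shows "SI Hd S'"
  unfolding SI_def
proof (intro allI)
  fix q
  have nS: "normal Hd Tl S" by (rule step_normal[OF st])
  have mono: "Active S \<subseteq> Active S'" "\<And>a. a \<in> Active S \<Longrightarrow> Val S' a = Val S a"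
    using step_mono[OF st] by auto
  have SIq: "(PC S q = P32 \<longrightarrow> Curr S q = Hd) \<and>
     (PC S q = P33 \<longrightarrow> Curr S q \<in> Active S \<and> nless (Val S (Curr S q)) (Num (Xp S q))) \<and>
     (PC S q = P34 \<longrightarrow> Curr S q \<in> Active S) \<and>
     (PC S q = P35 \<longrightarrow> Curr S q \<in> Active S \<and> nle (Num (Xp S q)) (Val S (Curr S q)))"
    using SI unfolding SI_def by blast
  show "(PC S' q = P32 \<longrightarrow> Curr S' q = Hd) \<and>
     (PC S' q = P33 \<longrightarrow> Curr S' q \<in> Active S' \<and> nless (Val S' (Curr S' q)) (Num (Xp S' q))) \<and>
     (PC S' q = P34 \<longrightarrow> Curr S' q \<in> Active S') \<and>
     (PC S' q = P35 \<longrightarrow> Curr S' q \<in> Active S' \<and> nle (Num (Xp S' q)) (Val S' (Curr S' q)))"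
  proof (cases "eproc e = q")
    case False
    then have "PC S' q = PC S q \<and> Curr S' q = Curr S q \<and> Xp S' q = Xp S q"
      using step_frame[OF st] by blast
    then show ?thesis using SIq mono by auto
  next
    case True
    note nf = nS_facts[OF nS HT]
    show ?thesis
    proof (cases "ekind e")
      case KInv then show ?thesis using step_KInv[OF st] True by auto
    next
      case KAdd then show ?thesis using step_KAdd[OF st] True by auto
    next
      case KRem then show ?thesis using step_KRem[OF st] True by auto
    next
      case KL31 then show ?thesis using step_KL31[OF st] True by auto
    next
      case KL32
      then have "Curr S q = Hd" using step_KL32[OF st] True SIq by auto
      then have "Nxt S (Curr S q) \<in> Active S" using nf HT by auto
      then show ?thesis using step_KL32[OF st] KL32 True by auto
    next
      case KL33
      then have "Curr S q \<in> Active S" "nless (Val S (Curr S q)) (Num (Xp S q))"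
        using step_KL33[OF st] True SIq by auto
      then have "Curr S q \<noteq> Tl" using nf by auto
      then have "Nxt S (Curr S q) \<in> Active S" using nf \<open>Curr S q \<in> Active S\<close> by auto
      then show ?thesis using step_KL33[OF st] KL33 True by auto
    next
      case KL34
      have ca: "Curr S q \<in> Active S" using step_KL34[OF st] KL34 True SIq by auto
      have x: "Xp S' q = Xp S q" "Curr S' q = Curr S q" using step_Xp[OF st] step_Curr[OF st] KL34 by auto
      show ?thesis using step_KL34[OF st] KL34 True ca x not_nle by auto
    next
      case KL35 then show ?thesis using step_KL35[OF st] True by auto
    qed
  qed
qed



lemma en_lt: "i < j \<Longrightarrow> enat j \<le> n \<Longrightarrow> enat i < n"
  by (metis enat_ord_simps(2) less_le_trans)
lemma en_le: "i \<le> j \<Longrightarrow> enat j \<le> n \<Longrightarrow> enat i \<le> n"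
  by (metis enat_ord_simps(1) order_trans)
lemma en_lt2: "i \<le> j \<Longrightarrow> enat j < n \<Longrightarrow> enat i < n"
  by (metis enat_ord_simps(1) le_less_trans)

locale hist =
  fixes Hd Tl :: 'a and S :: "nat \<Rightarrow> ('a,'p) st" and e :: "nat \<Rightarrow> ('a,'p) label" and n :: enat
  assumes H: "history Hd Tl S e n" and HT: "Hd \<noteq> Tl"
begin

definition onm :: "nat \<Rightarrow> 'a \<Rightarrow> bool" where
  "onm i a \<longleftrightarrow> rf Tl (Nxt (S i)) Hd a"
definition ins_at :: "nat \<Rightarrow> 'a \<Rightarrow> bool" where
  "ins_at i a \<longleftrightarrow> ekind (e i) = KAdd \<and> echi (e i) = C0 \<and> eadr (e i) = a"
definition rem_at :: "nat \<Rightarrow> 'a \<Rightarrow> bool" where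
  "rem_at i a \<longleftrightarrow> ekind (e i) = KRem \<and> echi (e i) = C1 \<and> eadr (e i) = a"

lemma stp: "enat i < n \<Longrightarrow> step Hd Tl (S i) (e i) (S (Suc i))"
  using H unfolding history_def by blast

lemma nrm: "enat i < n \<Longrightarrow> normal Hd Tl (S i)"
  by (rule step_normal[OF stp])

lemma nf: "enat i < n \<Longrightarrow> finite (Active (S i)) \<and> Hd \<in> Active (S i) \<and> Tl \<in> Active (S i) \<and>
  Val (S i) Hd = MinusOne \<and> Val (S i) Tl = Infty"
  using nS_facts[OF nrm HT] by blast

lemma nf_nxt: "enat i < n \<Longrightarrow> a \<in> Active (S i) \<Longrightarrow> a \<noteq> Tl \<Longrightarrow>
   Nxt (S i) a \<in> Active (S i) \<and> nless (Val (S i) a) (Val (S i) (Nxt (S i) a))"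
  using nS_facts[OF nrm HT] by blast

lemma onm_Hd: "onm i Hd"
  unfolding onm_def by (rule rf.intros)

lemma onm_active: "enat i < n \<Longrightarrow> onm i a \<Longrightarrow> a \<in> Active (S i)"
  unfolding onm_def using main_active[OF nrm HT] by blast

lemma onm_step: "onm i c \<Longrightarrow> c \<noteq> Tl \<Longrightarrow> onm i (Nxt (S i) c)"
  unfolding onm_def by (blast intro: rf.intros)

lemma mono1: "enat i < n \<Longrightarrow> Active (S i) \<subseteq> Active (S (Suc i)) \<and>
   (\<forall>a\<in>Active (S i). Val (S (Suc i)) a = Val (S i) a)"
  using step_mono[OF stp] by blast

lemma mono: "i \<le> j \<Longrightarrow> enat j \<le> n \<Longrightarrow> Active (S i) \<subseteq> Active (S j) \<and>
   (\<forall>a\<in>Active (S i). Val (S j) a = Val (S i) a)"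
proof (induction j)
  case 0 then show ?case by simp
next
  case (Suc j)
  show ?case
  proof (cases "i = Suc j")
    case True then show ?thesis by simp
  next
    case False
    then have "i \<le> j" using Suc by simp
    moreover have "enat j < n" using Suc by (simp add: Suc_ile_eq)
    ultimately have IH: "Active (S i) \<subseteq> Active (S j) \<and> (\<forall>a\<in>Active (S i). Val (S j) a = Val (S i) a)"
      using Suc.IH by (simp add: less_imp_le)
    have M: "Active (S j) \<subseteq> Active (S (Suc j)) \<and> (\<forall>a\<in>Active (S j). Val (S (Suc j)) a = Val (S j) a)"
      using mono1[OF \<open>enat j < n\<close>] .
    show ?thesis
    proof (intro conjI ballI)
      show "Active (S i) \<subseteq> Active (S (Suc j))" using IH M by (meson subset_trans)
    next
      fix a assume "a \<in> Active (S i)"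
      then show "Val (S (Suc j)) a = Val (S i) a" using IH M by (metis subsetD)
    qed
  qed
qed

lemma monoA: "i \<le> j \<Longrightarrow> enat j \<le> n \<Longrightarrow> a \<in> Active (S i) \<Longrightarrow> a \<in> Active (S j)"
  using mono by blast
lemma monoV: "i \<le> j \<Longrightarrow> enat j \<le> n \<Longrightarrow> a \<in> Active (S i) \<Longrightarrow> Val (S j) a = Val (S i) a"
  using mono by blast

lemma SI_all: "enat i \<le> n \<Longrightarrow> SI Hd (S i)"
proof (induction i)
  case 0
  then show ?case using H unfolding history_def init_state_def SI_def by auto
next
  case (Suc i)
  then have "enat i < n" by (simp add: Suc_ile_eq)
  then show ?case using Suc.IH SI_step[OF stp _ HT] less_imp_le by blast
qed

lemma SI_at: "enat i \<le> n \<Longrightarrow>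
   (PC (S i) p = P32 \<longrightarrow> Curr (S i) p = Hd) \<and>
   (PC (S i) p = P33 \<longrightarrow> Curr (S i) p \<in> Active (S i) \<and> nless (Val (S i) (Curr (S i) p)) (Num (Xp (S i) p))) \<and>
   (PC (S i) p = P34 \<longrightarrow> Curr (S i) p \<in> Active (S i)) \<and>
   (PC (S i) p = P35 \<longrightarrow> Curr (S i) p \<in> Active (S i) \<and> nle (Num (Xp (S i) p)) (Val (S i) (Curr (S i) p)))"
  using SI_all unfolding SI_def by blast

lemma E5: "enat i < n \<Longrightarrow> ins_at i a \<Longrightarrow> a \<notin> Active (S i) \<and> a \<in> Active (S (Suc i)) \<and>
   Val (S (Suc i)) a = Num (Xp (S i) (eproc (e i))) \<and> onm (Suc i) a"
proof -
  assume i: "enat i < n" and ia: "ins_at i a"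
  then obtain pp where pp: "rf Tl (Nxt (S i)) Hd pp \<and> pp \<noteq> Tl \<and> eadr (e i) \<notin> Active (S i) \<and>
     Nxt (S (Suc i)) = (Nxt (S i))(pp := eadr (e i), eadr (e i) := Nxt (S i) pp) \<and>
     Active (S (Suc i)) = insert (eadr (e i)) (Active (S i)) \<and>
     Val (S (Suc i)) = (Val (S i))(eadr (e i) := Num (Xp (S i) (eproc (e i))))"
    using step_ins[OF stp[OF i]] unfolding ins_at_def by blast
  then show ?thesis using insert_main[OF nrm[OF i] HT, of pp a] ia unfolding ins_at_def onm_def
    by auto
qed

lemma AI: "enat i \<le> n \<Longrightarrow> a \<in> Active (S i) \<Longrightarrow> a \<noteq> Hd \<Longrightarrow> a \<noteq> Tl \<Longrightarrow>
   \<exists>j<i. ins_at j a \<and> Val (S i) a = Num (Xp (S j) (eproc (e j)))"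
proof (induction i)
  case 0
  then show ?case using H unfolding history_def init_state_def by auto
next
  case (Suc i)
  then have i: "enat i < n" by (simp add: Suc_ile_eq)
  show ?case
  proof (cases "a \<in> Active (S i)")
    case True
    then obtain j where "j<i" "ins_at j a" "Val (S i) a = Num (Xp (S j) (eproc (e j)))"
      using Suc.IH i less_imp_le Suc.prems by blast
    then show ?thesis using mono1[OF i] True by (intro exI[of _ j]) auto
  next
    case False
    have "ins_at i a"
    proof (rule ccontr)
      assume nia: "\<not> ins_at i a"
      show False
      proof (cases "ekind (e i) = KAdd \<and> echi (e i) = C0")
        case True
        then show False using step_ins[OF stp[OF i]] nia False Suc.prems unfolding ins_at_def by auto
      next
        case F: False
        show False
        proof (cases "ekind (e i) = KRem \<and> echi (e i) = C1")
          case True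
          then show False using step_rem[OF stp[OF i]] False Suc.prems by auto
        next
          case False
          then show False using step_other[OF stp[OF i]] F \<open>a \<notin> Active (S i)\<close> Suc.prems by auto
        qed
      qed
    qed
    then show ?thesis using E5[OF i] by auto
  qed
qed

lemma ins_unique: "ins_at j a \<Longrightarrow> ins_at j' a \<Longrightarrow> enat j < n \<Longrightarrow> enat j' < n \<Longrightarrow> j = j'"
proof -
  have *: False if "ins_at j a" "ins_at j' a" "enat j' < n" "j < j'" for j j'
  proof -
    have "enat j < n" using that en_lt2[of j j'] by simp
    then have "a \<in> Active (S (Suc j))" using E5 that by blast
    then have "a \<in> Active (S j')" using monoA[of "Suc j" j'] that less_imp_le by (metis Suc_leI)
    then show False using E5 that by blast
  qed
  assume "ins_at j a" "ins_at j' a" "enat j < n" "enat j' < n"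
  then show "j = j'" using *[of j j'] *[of j' j] by (metis linorder_neqE_nat)
qed

lemma activation_eq: "ins_at j a \<Longrightarrow> enat j < n \<Longrightarrow> activation e n a = Act j"
  unfolding activation_def
  apply (rule arg_cong[where f=Act])
  apply (rule the_equality)
  using ins_unique unfolding ins_at_def by blast+

lemma E1: "enat i < n \<Longrightarrow> onm i a \<Longrightarrow> \<not> rem_at i a \<Longrightarrow> onm (Suc i) a"
proof -
  assume i: "enat i < n" and a: "onm i a" "\<not> rem_at i a"
  note nS = nrm[OF i]
  show ?thesis
  proof (cases "ekind (e i) = KAdd \<and> echi (e i) = C0")
    case True
    then obtain pp where pp: "rf Tl (Nxt (S i)) Hd pp \<and> pp \<noteq> Tl \<and> eadr (e i) \<notin> Active (S i) \<and>
     Nxt (S (Suc i)) = (Nxt (S i))(pp := eadr (e i), eadr (e i) := Nxt (S i) pp)"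
      using step_ins[OF stp[OF i]] by blast
    then show ?thesis using insert_main[OF nS HT, of pp "eadr (e i)" a] a unfolding onm_def by auto
  next
    case F: False
    show ?thesis
    proof (cases "ekind (e i) = KRem \<and> echi (e i) = C1")
      case True
      then obtain pr where pr: "rf Tl (Nxt (S i)) Hd pr" "pr \<noteq> Tl" "Nxt (S i) pr = eadr (e i)"
        "Val (S i) (eadr (e i)) = Num (Xp (S i) (eproc (e i)))"
        "Nxt (S (Suc i)) = (Nxt (S i))(pr := Nxt (S i) (eadr (e i)))"
        using step_rem[OF stp[OF i]] by blast
      have "eadr (e i) \<noteq> Tl" using pr(4) nf[OF i] by auto
      moreover have "a \<noteq> eadr (e i)" using a True unfolding rem_at_def by auto
      ultimately show ?thesis using remove_main[OF nS HT pr(1,2,3)] pr(5) a unfolding onm_def by auto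
    next
      case False
      then show ?thesis using step_other[OF stp[OF i]] F a unfolding onm_def by auto
    qed
  qed
qed

lemma E2: "enat i < n \<Longrightarrow> onm (Suc i) a \<Longrightarrow> onm i a \<or> ins_at i a"
proof -
  assume i: "enat i < n" and a: "onm (Suc i) a"
  note nS = nrm[OF i]
  show ?thesis
  proof (cases "ekind (e i) = KAdd \<and> echi (e i) = C0")
    case True
    then obtain pp where pp: "rf Tl (Nxt (S i)) Hd pp \<and> pp \<noteq> Tl \<and> eadr (e i) \<notin> Active (S i) \<and>
     Nxt (S (Suc i)) = (Nxt (S i))(pp := eadr (e i), eadr (e i) := Nxt (S i) pp)"
      using step_ins[OF stp[OF i]] by blast
    then show ?thesis using insert_main[OF nS HT, of pp "eadr (e i)" a] a True
      unfolding onm_def ins_at_def by auto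
  next
    case F: False
    show ?thesis
    proof (cases "ekind (e i) = KRem \<and> echi (e i) = C1")
      case True
      then obtain pr where pr: "rf Tl (Nxt (S i)) Hd pr" "pr \<noteq> Tl" "Nxt (S i) pr = eadr (e i)"
        "Val (S i) (eadr (e i)) = Num (Xp (S i) (eproc (e i)))"
        "Nxt (S (Suc i)) = (Nxt (S i))(pr := Nxt (S i) (eadr (e i)))"
        using step_rem[OF stp[OF i]] by blast
      have "eadr (e i) \<noteq> Tl" using pr(4) nf[OF i] by auto
      then show ?thesis using remove_main[OF nS HT pr(1,2,3)] pr(5) a unfolding onm_def by auto
    next
      case False
      then show ?thesis using step_other[OF stp[OF i]] F a unfolding onm_def by auto
    qed
  qed
qed

lemma E3: "enat i < n \<Longrightarrow> rem_at i a \<Longrightarrow> onm i a \<and> \<not> onm (Suc i) a \<and>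
   Nxt (S (Suc i)) a = Nxt (S i) a \<and> a \<noteq> Tl \<and> onm (Suc i) (Nxt (S i) a)"
proof -
  assume i: "enat i < n" and ra: "rem_at i a"
  note nS = nrm[OF i]
  obtain pr where pr: "rf Tl (Nxt (S i)) Hd pr" "pr \<noteq> Tl" "Nxt (S i) pr = a" "rf Tl (Nxt (S i)) Hd a"
        "Val (S i) a = Num (Xp (S i) (eproc (e i)))"
        "Nxt (S (Suc i)) = (Nxt (S i))(pr := Nxt (S i) a)"
    using step_rem[OF stp[OF i]] ra unfolding rem_at_def by blast
  have aT: "a \<noteq> Tl" using pr(5) nf[OF i] by auto
  have aA: "a \<in> Active (S i)" using pr(4) main_active[OF nS HT] by blast
  have "nless (Val (S i) pr) (Val (S i) a)" using nf_nxt[OF i, of pr] pr main_active[OF nS HT] by blast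
  then have "pr \<noteq> a" by auto
  have na: "Nxt (S i) a \<noteq> a" using nf_nxt[OF i aA aT] by auto
  have "rf Tl (Nxt (S i)) Hd (Nxt (S i) a)" using pr(4) aT by (blast intro: rf.intros)
  then show ?thesis using remove_main[OF nS HT pr(1,2,3) aT] pr(4,6) \<open>pr \<noteq> a\<close> na aT
    unfolding onm_def by auto
qed

lemma E4: "enat i < n \<Longrightarrow> a \<in> Active (S i) \<Longrightarrow> \<not> onm i a \<Longrightarrow> Nxt (S (Suc i)) a = Nxt (S i) a"
proof -
  assume i: "enat i < n" and a: "a \<in> Active (S i)" "\<not> onm i a"
  show ?thesis
  proof (cases "ekind (e i) = KAdd \<and> echi (e i) = C0")
    case True
    then obtain pp where pp: "rf Tl (Nxt (S i)) Hd pp \<and> pp \<noteq> Tl \<and> eadr (e i) \<notin> Active (S i) \<and>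
     Nxt (S (Suc i)) = (Nxt (S i))(pp := eadr (e i), eadr (e i) := Nxt (S i) pp)"
      using step_ins[OF stp[OF i]] by blast
    then have "a \<noteq> pp" "a \<noteq> eadr (e i)" using a unfolding onm_def by auto
    then show ?thesis using pp by simp
  next
    case F: False
    show ?thesis
    proof (cases "ekind (e i) = KRem \<and> echi (e i) = C1")
      case True
      then obtain pr where pr: "rf Tl (Nxt (S i)) Hd pr"
        "Nxt (S (Suc i)) = (Nxt (S i))(pr := Nxt (S i) (eadr (e i)))"
        using step_rem[OF stp[OF i]] by blast
      then have "a \<noteq> pr" using a unfolding onm_def by auto
      then show ?thesis using pr by simp
    next
      case False
      then show ?thesis using step_other[OF stp[OF i]] F by auto
    qed
  qed
qed

lemma never_back: "a \<in> Active (S i) \<Longrightarrow> \<not> onm i a \<Longrightarrow> i \<le> j \<Longrightarrow> enat j \<le> n \<Longrightarrow> \<not> onm j a"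
proof (induction j)
  case 0 then show ?case by simp
next
  case (Suc j)
  show ?case
  proof (cases "i = Suc j")
    case True then show ?thesis using Suc by simp
  next
    case False
    then have ij: "i \<le> j" using Suc by simp
    have j: "enat j < n" using Suc by (simp add: Suc_ile_eq)
    have "\<not> onm j a" using Suc.IH Suc.prems ij j less_imp_le by blast
    moreover have "a \<in> Active (S j)" using monoA[OF ij] Suc.prems j less_imp_le by blast
    ultimately show ?thesis using E2[OF j] E5[OF j] by blast
  qed
qed

lemma stay: "onm i a \<Longrightarrow> i \<le> j \<Longrightarrow> enat j \<le> n \<Longrightarrow> (\<forall>k. i \<le> k \<longrightarrow> k < j \<longrightarrow> \<not> rem_at k a) \<Longrightarrow> onm j a"
proof (induction j)
  case 0 then show ?case by simp
next
  case (Suc j)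
  show ?case
  proof (cases "i = Suc j")
    case True then show ?thesis using Suc by simp
  next
    case False
    then have ij: "i \<le> j" using Suc by simp
    have j: "enat j < n" using Suc by (simp add: Suc_ile_eq)
    have "onm j a" using Suc.IH Suc.prems ij j less_imp_le by (metis less_SucI)
    then show ?thesis using E1[OF j] Suc.prems ij by auto
  qed
qed

lemma G: "onm t0 c \<Longrightarrow> t0 \<le> s \<Longrightarrow> enat s \<le> n \<Longrightarrow> \<not> onm s c \<Longrightarrow>
  \<exists>t. t0 \<le> t \<and> t < s \<and> onm t c \<and> rem_at t c \<and> Nxt (S s) c = Nxt (S t) c"
proof (induction s)
  case 0 then show ?case by simp
next
  case (Suc s)
  have ts: "t0 \<le> s" using Suc by (metis le_SucE)
  have s: "enat s < n" using Suc by (simp add: Suc_ile_eq)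
  show ?case
  proof (cases "onm s c")
    case True
    then have "rem_at s c" using E1[OF s] Suc by blast
    then show ?thesis using E3[OF s] True ts by (intro exI[of _ s]) auto
  next
    case False
    then obtain t where t: "t0 \<le> t" "t < s" "onm t c" "rem_at t c" "Nxt (S s) c = Nxt (S t) c"
      using Suc.IH Suc.prems ts s less_imp_le by blast
    have "c \<in> Active (S t0)" using onm_active Suc.prems ts s en_lt2 by blast
    then have "c \<in> Active (S s)" using monoA[OF ts] s less_imp_le by blast
    then have "Nxt (S (Suc s)) c = Nxt (S s) c" using E4[OF s] False by blast
    then show ?thesis using t by (intro exI[of _ t]) auto
  qed
qed

end


context hist begin

lemma cnt_facts: "is_cnt_exec e n b r \<Longrightarrow> b < r \<and> enat r < n \<and> enat b < n \<and> ekind (e b) = KL31 \<and>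
  ekind (e r) = KL35 \<and> eproc (e r) = eproc (e b) \<and>
  (\<forall>j. b < j \<and> j < r \<and> eproc (e j) = eproc (e b) \<longrightarrow> ekind (e j) \<in> {KL32, KL33, KL34})"
  unfolding is_cnt_exec_def using en_lt2[of b r n] by auto

lemma trav_Xp: "is_cnt_exec e n b r \<Longrightarrow> b \<le> s \<Longrightarrow> s \<le> r \<Longrightarrow>
   Xp (S s) (eproc (e b)) = Xp (S b) (eproc (e b))"
proof (induction s)
  case 0 then show ?case by simp
next
  case (Suc s)
  note cf = cnt_facts[OF Suc.prems(1)]
  show ?case
  proof (cases "b = Suc s")
    case True then show ?thesis by simp
  next
    case False
    then have bs: "b \<le> s" "s < r" using Suc.prems by auto
    then have s: "enat s < n" using cf en_lt2[of s r n] by simp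
    have IH: "Xp (S s) (eproc (e b)) = Xp (S b) (eproc (e b))" using Suc.IH Suc.prems bs by simp
    show ?thesis
    proof (cases "eproc (e s) = eproc (e b)")
      case False
      then show ?thesis using step_frame[OF stp[OF s]] IH by metis
    next
      case True
      have "ekind (e s) \<noteq> KInv"
      proof (cases "s = b")
        case True then show ?thesis using cf by simp
      next
        case False then have "b < s" using bs by simp
        then show ?thesis using cf bs True by auto
      qed
      then show ?thesis using step_Xp[OF stp[OF s]] IH by simp
    qed
  qed
qed

lemma move_ok: "b \<le> t0 \<Longrightarrow> t0 \<le> s \<Longrightarrow> enat s < n \<Longrightarrow> onm t0 c \<Longrightarrow> c \<noteq> Tl \<Longrightarrow>
   \<exists>t. b \<le> t \<and> t \<le> s \<and> onm t (Nxt (S s) c)"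
proof -
  assume a: "b \<le> t0" "t0 \<le> s" "enat s < n" "onm t0 c" "c \<noteq> Tl"
  show ?thesis
  proof (cases "onm s c")
    case True
    then show ?thesis using onm_step a by (intro exI[of _ s]) auto
  next
    case False
    then obtain t where t: "t0 \<le> t" "t < s" "onm t c" "rem_at t c" "Nxt (S s) c = Nxt (S t) c"
      using G[OF a(4,2)] a(3) less_imp_le by blast
    have "enat t < n" using t(2) a(3) en_lt2[of t s n] by simp
    then have "onm (Suc t) (Nxt (S t) c)" using E3 t(4) by blast
    then show ?thesis using t a by (intro exI[of _ "Suc t"]) auto
  qed
qed

lemma trav_A: "is_cnt_exec e n b r \<Longrightarrow> b < s \<Longrightarrow> s \<le> r \<Longrightarrow>
   \<exists>t. b \<le> t \<and> t \<le> s \<and> onm t (Curr (S s) (eproc (e b)))"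
proof (induction s)
  case 0 then show ?case by simp
next
  case (Suc s)
  note cf = cnt_facts[OF Suc.prems(1)]
  have s: "enat s < n" using cf Suc.prems en_lt2[of s r n] by simp
  show ?case
  proof (cases "s = b")
    case True
    then have "Curr (S (Suc s)) (eproc (e b)) = Hd" using step_KL31[OF stp[OF s]] cf by simp
    then show ?thesis using onm_Hd True by (intro exI[of _ b]) auto
  next
    case False
    then have bs: "b < s" "s < r" using Suc.prems by auto
    then obtain t0 where t0: "b \<le> t0" "t0 \<le> s" "onm t0 (Curr (S s) (eproc (e b)))"
      using Suc.IH Suc.prems by auto
    let ?p = "eproc (e b)" let ?c = "Curr (S s) ?p"
    have sle: "enat s \<le> n" using s by (simp add: less_imp_le)
    show ?thesis
    proof (cases "eproc (e s) = ?p \<and> ekind (e s) \<in> {KL31, KL32, KL33}")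
      case False
      then have "Curr (S (Suc s)) ?p = ?c" using step_frame[OF stp[OF s]] step_Curr[OF stp[OF s]]
        by metis
      then show ?thesis using t0 by (intro exI[of _ t0]) auto
    next
      case True
      then have k: "ekind (e s) = KL32 \<or> ekind (e s) = KL33" using cf bs by force
      have "?c \<noteq> Tl"
      proof (cases "ekind (e s) = KL32")
        case True
        then have "PC (S s) ?p = P32" using step_KL32[OF stp[OF s]] \<open>eproc (e s) = ?p \<and> _\<close> by auto
        then have "?c = Hd" using SI_at[OF sle] by blast
        then show ?thesis using HT by simp
      next
        case False
        then have "PC (S s) ?p = P33" using k step_KL33[OF stp[OF s]] \<open>eproc (e s) = ?p \<and> _\<close> by auto
        then have "nless (Val (S s) ?c) (Num (Xp (S s) ?p))" using SI_at[OF sle] by blast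
        then show ?thesis using nf[OF s] by auto
      qed
      moreover have "Curr (S (Suc s)) ?p = Nxt (S s) ?c"
        using k step_KL32[OF stp[OF s]] step_KL33[OF stp[OF s]] True by auto
      ultimately show ?thesis using move_ok[OF t0(1,2) s t0(3)] by auto
    qed
  qed
qed


lemma trav_B:
  assumes ce: "is_cnt_exec e n b r" and ia: "ins_at j a" and jb: "j < b"
    and onA: "\<forall>u. b \<le> u \<longrightarrow> u \<le> r \<longrightarrow> onm u a"
    and xv: "Xp (S j) (eproc (e j)) = Xp (S b) (eproc (e b))"
  shows "b < s \<Longrightarrow> s \<le> r \<Longrightarrow>
    nle (Val (S s) (Curr (S s) (eproc (e b)))) (Num (Xp (S b) (eproc (e b))))"
proof -
  note cf = cnt_facts[OF ce]
  let ?p = "eproc (e b)" let ?x = "Xp (S b) (eproc (e b))"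
  have j: "enat j < n" using jb cf en_lt2[of j b n] by simp
  have aV: "a \<in> Active (S u) \<and> Val (S u) a = Num ?x" if "Suc j \<le> u" "enat u \<le> n" for u
    using E5[OF j ia] monoA[OF that] monoV[OF that] xv by auto
  have move_B: "nle (Val (S s) (Nxt (S s) c)) (Num ?x)"
    if h: "b \<le> s" "s < r" "b \<le> t0" "t0 \<le> s" "onm t0 c" "c \<noteq> Tl" "nless (Val (S s) c) (Num ?x)" for s t0 c
  proof -
    have s: "enat s < n" using h cf en_lt2[of s r n] by simp
    have sle: "enat s \<le> n" using s by (simp add: less_imp_le)
    show ?thesis
    proof (cases "onm s c")
      case True
      have "onm s a" using onA h by simp
      moreover have "Val (S s) a = Num ?x" using aV[of s] h jb sle by simp
      ultimately show ?thesis using sorted_main[OF nrm[OF s] HT, of c a] True h unfolding onm_def by simp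
    next
      case False
      then obtain t where t: "t0 \<le> t" "t < s" "onm t c" "rem_at t c" "Nxt (S s) c = Nxt (S t) c"
        using G[OF h(5,4) sle] by blast
      have tn: "enat t < n" using t(2) s en_lt2[of t s n] by simp
      have tle: "t \<le> s" using t by simp
      have oa: "onm t a" using onA h t by simp
      have vt: "Val (S t) a = Num ?x" using aV[of t] h jb t tn by (simp add: less_imp_le)
      have cA: "c \<in> Active (S t)" using onm_active[OF tn t(3)] .
      have cv: "Val (S s) c = Val (S t) c" using monoV[OF tle sle cA] .
      have "nle (Val (S t) (Nxt (S t) c)) (Val (S t) a)"
        using sorted_main[OF nrm[OF tn] HT, of c a] t(3) oa h cv vt unfolding onm_def by simp
      moreover have "Nxt (S t) c \<in> Active (S t)" using onm_active[OF tn onm_step[OF t(3) h(6)]] .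
      ultimately show ?thesis using monoV[OF tle sle] t(5) vt by simp
    qed
  qed
  show "b < s \<Longrightarrow> s \<le> r \<Longrightarrow> nle (Val (S s) (Curr (S s) ?p)) (Num ?x)"
  proof (induction s)
    case 0 then show ?case by simp
  next
    case (Suc s)
    have s: "enat s < n" using cf Suc.prems en_lt2[of s r n] by simp
    have sle: "enat s \<le> n" using s by (simp add: less_imp_le)
    have s1: "enat (Suc s) < n" using cf Suc.prems en_lt2[of "Suc s" r n] by simp
    show ?case
    proof (cases "s = b")
      case True
      then have "Curr (S (Suc s)) ?p = Hd" using step_KL31[OF stp[OF s]] cf by simp
      then show ?thesis using nf[OF s1] by (simp add: nle_def)
    next
      case False
      then have bs: "b < s" "s < r" using Suc.prems by auto
      let ?c = "Curr (S s) ?p"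
      have IH: "nle (Val (S s) ?c) (Num ?x)" using Suc.IH bs by simp
      obtain t0 where t0: "b \<le> t0" "t0 \<le> s" "onm t0 ?c" using trav_A[OF ce bs(1)] bs by auto
      have t0n: "enat t0 < n" using t0 s en_lt2 by blast
      have cA: "?c \<in> Active (S s)" using monoA[OF t0(2) sle onm_active[OF t0n t0(3)]] .
      have xs: "Xp (S s) ?p = ?x" using trav_Xp[OF ce, of s] bs by simp
      show ?thesis
      proof (cases "eproc (e s) = ?p \<and> ekind (e s) \<in> {KL31, KL32, KL33}")
        case False
        then have "Curr (S (Suc s)) ?p = ?c" using step_frame[OF stp[OF s]] step_Curr[OF stp[OF s]]
          by metis
        then show ?thesis using IH mono1[OF s] cA by simp
      next
        case True
        then have k: "ekind (e s) = KL32 \<or> ekind (e s) = KL33" using cf bs by force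
        have cT: "?c \<noteq> Tl \<and> nless (Val (S s) ?c) (Num ?x)"
        proof (cases "ekind (e s) = KL32")
          case True
          then have "PC (S s) ?p = P32" using step_KL32[OF stp[OF s]] \<open>eproc (e s) = ?p \<and> _\<close> by auto
          then have "?c = Hd" using SI_at[OF sle] by blast
          then show ?thesis using HT nf[OF s] by simp
        next
          case False
          then have "PC (S s) ?p = P33" using k step_KL33[OF stp[OF s]] \<open>eproc (e s) = ?p \<and> _\<close> by auto
          then have "nless (Val (S s) ?c) (Num ?x)" using SI_at[OF sle] xs by metis
          then show ?thesis using nf[OF s] by auto
        qed
        have "Curr (S (Suc s)) ?p = Nxt (S s) ?c \<and> Val (S (Suc s)) = Val (S s)"
          using k step_KL32[OF stp[OF s]] step_KL33[OF stp[OF s]] True by auto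
        then show ?thesis using move_B[OF _ bs(2) t0(1,2,3)] cT bs by simp
      qed
    qed
  qed
qed

lemma A1_act: "enat i < n \<Longrightarrow> ekind (e i) = KAdd \<or> ekind (e i) = KRem \<Longrightarrow> echi (e i) = C1 \<Longrightarrow>
  \<exists>j<i. ins_at j (eadr (e i)) \<and> Xp (S j) (eproc (e j)) = Xp (S i) (eproc (e i)) \<and> onm i (eadr (e i))"
proof -
  assume i: "enat i < n" and k: "ekind (e i) = KAdd \<or> ekind (e i) = KRem" and c: "echi (e i) = C1"
  have "onm i (eadr (e i)) \<and> Val (S i) (eadr (e i)) = Num (Xp (S i) (eproc (e i)))"
  proof (cases "ekind (e i) = KAdd")
    case True
    then obtain pp where "rf Tl (Nxt (S i)) Hd pp" "pp \<noteq> Tl"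
      "Val (S i) (Nxt (S i) pp) = Num (Xp (S i) (eproc (e i)))" "eadr (e i) = Nxt (S i) pp"
      using step_addC1[OF stp[OF i]] c by blast
    then show ?thesis using onm_step unfolding onm_def by metis
  next
    case False
    then show ?thesis using step_rem[OF stp[OF i]] k c unfolding onm_def by auto
  qed
  moreover have ile: "enat i \<le> n" using i by (simp add: less_imp_le)
  ultimately show ?thesis using AI[OF ile, of "eadr (e i)"] onm_active[OF i] nf[OF i] by fastforce
qed

lemma gamma_rem: "enat k < n \<Longrightarrow> ekind (e k) = KRem \<Longrightarrow> echi (e k) = C1 \<Longrightarrow>
   activation e n (eadr (e k)) = Act j \<Longrightarrow> ins_at j a \<Longrightarrow> enat j < n \<Longrightarrow> rem_at k a"
proof -
  assume k: "enat k < n" "ekind (e k) = KRem" "echi (e k) = C1"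
    and g: "activation e n (eadr (e k)) = Act j" and ia: "ins_at j a" "enat j < n"
  obtain j' where j': "j' < k" "ins_at j' (eadr (e k))" using A1_act[OF k(1)] k by blast
  have "enat j' < n" using j' k en_lt2[of j' k n] by simp
  then have "activation e n (eadr (e k)) = Act j'" using activation_eq j' by blast
  then have "j' = j" using g by simp
  then have "eadr (e k) = a" using j' ia unfolding ins_at_def by simp
  then show ?thesis using k unfolding rem_at_def by simp
qed

lemma no_rem: "rem_at k a \<Longrightarrow> enat k < n \<Longrightarrow> k < i \<Longrightarrow> enat i \<le> n \<Longrightarrow> \<not> onm i a"
proof -
  assume a: "rem_at k a" "enat k < n" "k < i" "enat i \<le> n"
  have "a \<in> Active (S k)" using E3[OF a(2,1)] onm_active[OF a(2)] by blast
  then have "a \<in> Active (S (Suc k))" using mono1[OF a(2)] by blast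
  then show ?thesis using never_back[of a "Suc k" i] E3[OF a(2,1)] a by simp
qed

lemma A1_cnt: "is_cnt_exec e n b r \<Longrightarrow> echi (e r) = C1 \<Longrightarrow>
  \<exists>j<r. ins_at j (Curr (S r) (eproc (e r))) \<and> Xp (S j) (eproc (e j)) = Xp (S b) (eproc (e b)) \<and>
    (\<exists>t. b \<le> t \<and> t \<le> r \<and> onm t (Curr (S r) (eproc (e r))))"
proof -
  assume ce: "is_cnt_exec e n b r" and c: "echi (e r) = C1"
  have br: "b < r" and r: "enat r < n" and kr: "ekind (e r) = KL35" and pr: "eproc (e r) = eproc (e b)"
    using ce unfolding is_cnt_exec_def by auto
  let ?p = "eproc (e b)" let ?a = "Curr (S r) ?p"
  have rle: "enat r \<le> n" using r by (simp add: less_imp_le)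
  have K: "PC (S r) ?p = P35 \<and> echi (e r) = (if Val (S r) ?a = Num (Xp (S r) ?p) then C1 else C0)"
    using step_KL35[OF stp[OF r] kr] pr by simp
  then have pc: "PC (S r) ?p = P35" by blast
  from K c have v: "Val (S r) ?a = Num (Xp (S r) ?p)" by (cases "Val (S r) ?a = Num (Xp (S r) ?p)") auto
  have aA: "?a \<in> Active (S r)" using SI_at[OF rle, of ?p] pc by blast
  have xr: "Xp (S r) ?p = Xp (S b) ?p" using trav_Xp[OF ce, of r] br by simp
  have vr: "Val (S r) ?a = Num (Xp (S b) ?p)" using v xr by simp
  have nfr: "Val (S r) Hd = MinusOne" "Val (S r) Tl = Infty" using nf[OF r] by auto
  have "?a \<noteq> Hd" "?a \<noteq> Tl" using vr nfr by auto
  then obtain j where j: "j<r" "ins_at j ?a" "Val (S r) ?a = Num (Xp (S j) (eproc (e j)))"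
    using AI[OF rle aA] by blast
  then have xj: "Xp (S j) (eproc (e j)) = Xp (S b) ?p" using vr by simp
  obtain t where t: "b \<le> t" "t \<le> r" "onm t ?a" using trav_A[OF ce br] by auto
  show ?thesis
    apply (rule exI[of _ j])
    using j xj t pr by auto
qed

lemma cnt_br: "is_cnt_exec e n b r \<Longrightarrow> enat b < n \<and> enat r < n \<and> b < r"
  using cnt_facts by blast

lemma A0_MH: "A0 (MH S e n)"
  unfolding A0_def
proof (intro conjI ballI impI)
  show "Actions (MH S e n) \<subseteq> Ev (MH S e n)" by (auto simp: MH_def)
next
  fix X assume X: "X \<in> Ev (MH S e n)"
  show "\<not> (IsAdd (MH S e n) X \<and> IsRem (MH S e n) X)" by (cases X) (auto simp: MH_def)
  show "\<not> (IsAdd (MH S e n) X \<and> IsCnt (MH S e n) X)" by (cases X) (auto simp: MH_def)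
  show "\<not> (IsRem (MH S e n) X \<and> IsCnt (MH S e n) X)" by (cases X) (auto simp: MH_def)
  show "IsAdd (MH S e n) X \<or> IsRem (MH S e n) X \<Longrightarrow> X \<in> Actions (MH S e n)"
    using X by (cases X) (auto simp: MH_def)
  show "IsCnt (MH S e n) X \<Longrightarrow> X \<notin> Actions (MH S e n)" by (cases X) (auto simp: MH_def)
  show "Begin (MH S e n) X \<in> Actions (MH S e n)" using X cnt_br by (cases X) (auto simp: MH_def)
  show "End (MH S e n) X \<in> Actions (MH S e n)" using X cnt_br by (cases X) (auto simp: MH_def)
  show "IsCnt (MH S e n) X \<Longrightarrow> lt (MH S e n) (Begin (MH S e n) X) (End (MH S e n) X)"
    using X cnt_br by (cases X) (auto simp: MH_def)
next
  fix a assume "a \<in> Actions (MH S e n)"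
  then show "\<not> lt (MH S e n) a a" by (auto simp: MH_def)
next
  fix a b c assume "a \<in> Actions (MH S e n)" "b \<in> Actions (MH S e n)" "c \<in> Actions (MH S e n)"
    "lt (MH S e n) a b" "lt (MH S e n) b c"
  then show "lt (MH S e n) a c" by (auto simp: MH_def)
next
  fix a b assume "a \<in> Actions (MH S e n)" "b \<in> Actions (MH S e n)"
  then show "lt (MH S e n) a b \<or> a = b \<or> lt (MH S e n) b a" by (auto simp: MH_def)
qed

lemma A1_MH: "A1 (MH S e n)"
  unfolding A1_def
proof (intro ballI impI)
  fix A assume AE: "A \<in> Ev (MH S e n)" and op: "Op (MH S e n) C1 A"
  show "gamma (MH S e n) A \<in> Ev (MH S e n) \<and> IsAdd (MH S e n) (gamma (MH S e n) A) \<and>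
       chi (MH S e n) (gamma (MH S e n) A) = C0 \<and>
       val (MH S e n) (gamma (MH S e n) A) = val (MH S e n) A \<and>
       evless (MH S e n) (gamma (MH S e n) A) (End (MH S e n) A) \<and>
       \<not> (\<exists>R\<in>Ev (MH S e n). IsRem (MH S e n) R \<and> chi (MH S e n) R = C1 \<and>
          gamma (MH S e n) R = gamma (MH S e n) A \<and>
          evless (MH S e n) (gamma (MH S e n) A) R \<and> evless (MH S e n) R A)"
  proof (cases A)
    case (Act i)
    note AA = Act
    have i: "enat i < n" using AE Act by (auto simp: MH_def)
    have k: "ekind (e i) = KAdd \<or> ekind (e i) = KRem" "echi (e i) = C1"
      using op Act by (auto simp: Op_def MH_def)
    obtain j where j: "j < i" "ins_at j (eadr (e i))" "Xp (S j) (eproc (e j)) = Xp (S i) (eproc (e i))"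
      "onm i (eadr (e i))"
      using A1_act[OF i k] by blast
    have jn: "enat j < n" using j(1) i en_lt2[of j i n] by simp
    have g: "gamma (MH S e n) A = Act j" using activation_eq[OF j(2) jn] Act by (simp add: MH_def)
    have nR: False if R: "R \<in> Ev (MH S e n)" "IsRem (MH S e n) R" "chi (MH S e n) R = C1"
       "gamma (MH S e n) R = Act j" "evless (MH S e n) (Act j) R" "evless (MH S e n) R A" for R
    proof (cases R)
      case (Act k)
      have kn: "enat k < n" "ekind (e k) = KRem" "echi (e k) = C1" "activation e n (eadr (e k)) = Act j"
        using R Act by (auto simp: MH_def)
      have "j < k" "k < i" using R Act AA by (auto simp: MH_def evless_def)
      have "rem_at k (eadr (e i))" using gamma_rem[OF kn j(2) jn] .
      then have "\<not> onm i (eadr (e i))" using no_rem kn(1) \<open>k < i\<close> i less_imp_le by blast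
      then show False using j(4) by simp
    next
      case (CntEx b r)
      then show False using R by (simp add: MH_def)
    qed
    show ?thesis
      unfolding g using j jn Act nR
      by (auto simp: MH_def ins_at_def evless_def)
  next
    case (CntEx b r)
    note AC = CntEx
    have ce: "is_cnt_exec e n b r" using AE CntEx by (auto simp: MH_def)
    have c: "echi (e r) = C1" using op CntEx by (auto simp: Op_def MH_def)
    let ?a = "Curr (S r) (eproc (e r))"
    obtain j t where j: "j<r" "ins_at j ?a" "Xp (S j) (eproc (e j)) = Xp (S b) (eproc (e b))"
      "b \<le> t" "t \<le> r" "onm t ?a"
      using A1_cnt[OF ce c] by blast
    have r: "enat r < n" using cnt_br[OF ce] by blast
    have jn: "enat j < n" using j(1) r en_lt2[of j r n] by simp
    have tn: "enat t \<le> n" using j(5) r en_lt2[of t r n] less_imp_le by blast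
    have g: "gamma (MH S e n) A = Act j" using activation_eq[OF j(2) jn] CntEx by (simp add: MH_def)
    have nR: False if R: "R \<in> Ev (MH S e n)" "IsRem (MH S e n) R" "chi (MH S e n) R = C1"
       "gamma (MH S e n) R = Act j" "evless (MH S e n) (Act j) R" "evless (MH S e n) R A" for R
    proof (cases R)
      case (Act k)
      have kn: "enat k < n" "ekind (e k) = KRem" "echi (e k) = C1" "activation e n (eadr (e k)) = Act j"
        using R Act by (auto simp: MH_def)
      have "k < b" using R Act AC by (auto simp: MH_def evless_def)
      then have "k < t" using j(4) by simp
      have "rem_at k ?a" using gamma_rem[OF kn j(2) jn] .
      then have "\<not> onm t ?a" using no_rem kn(1) \<open>k < t\<close> tn by blast
      then show False using j(6) by simp
    next
      case (CntEx b r)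
      then show False using R by (simp add: MH_def)
    qed
    show ?thesis
      unfolding g using j jn CntEx nR
      by (auto simp: MH_def ins_at_def evless_def)
  qed
qed

lemma A2_MH: "A2 (MH S e n)"
  unfolding A2_def
proof (intro ballI impI)
  fix B A assume BE: "B \<in> Ev (MH S e n)" and AE: "A \<in> Ev (MH S e n)"
    and h: "Op (MH S e n) C0 B \<and> IsAdd (MH S e n) A \<and> chi (MH S e n) A = C0 \<and>
       evless (MH S e n) A B \<and> val (MH S e n) A = val (MH S e n) B"
  obtain j where Aj: "A = Act j" using h by (cases A) (auto simp: MH_def)
  have jn: "enat j < n" using AE Aj by (auto simp: MH_def)
  let ?a = "eadr (e j)"
  have ia: "ins_at j ?a" using h Aj by (auto simp: MH_def ins_at_def)
  let ?x = "Xp (S j) (eproc (e j))"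
  obtain EB where EB: "End (MH S e n) B = Act EB" "enat EB < n"
    using BE cnt_br by (cases B) (auto simp: MH_def)
  show "\<exists>R\<in>Ev (MH S e n). IsRem (MH S e n) R \<and> chi (MH S e n) R = C1 \<and> gamma (MH S e n) R = A \<and>
          evless (MH S e n) R (End (MH S e n) B)"
  proof (rule ccontr)
    assume nex: "\<not> ?thesis"
    have nor: "\<not> rem_at k ?a" if "k < EB" for k
    proof
      assume ra: "rem_at k ?a"
      have kn: "enat k < n" using that EB(2) en_lt2[of k EB n] by simp
      have "activation e n (eadr (e k)) = Act j" using ra activation_eq[OF ia jn] unfolding rem_at_def by simp
      then have "Act k \<in> Ev (MH S e n) \<and> IsRem (MH S e n) (Act k) \<and> chi (MH S e n) (Act k) = C1 \<and>
         gamma (MH S e n) (Act k) = A \<and> evless (MH S e n) (Act k) (End (MH S e n) B)"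
        using kn ra Aj EB that by (simp add: MH_def rem_at_def evless_def)
      then show False using nex by blast
    qed
    have onA: "onm u ?a" if "Suc j \<le> u" "u \<le> EB" for u
    proof -
      have "enat u \<le> n" using that EB(2) en_lt2[of u EB n] less_imp_le by blast
      moreover have "onm (Suc j) ?a" using E5[OF jn ia] by blast
      ultimately show ?thesis using stay[of "Suc j" ?a u] that nor by simp
    qed
    have aV: "Val (S u) ?a = Num ?x" if "Suc j \<le> u" "enat u \<le> n" for u
      using E5[OF jn ia] monoV[OF that] by auto
    show False
    proof (cases B)
      case (Act i)
      have i: "enat i < n" and iE: "EB = i" using BE Act EB by (auto simp: MH_def)
      have ji: "j < i" using h Aj Act by (simp add: MH_def evless_def)
      have opB: "(ekind (e i) = KAdd \<or> ekind (e i) = KRem) \<and> echi (e i) = C0"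
        using h Act by (auto simp: MH_def Op_def)
      have xe: "Xp (S i) (eproc (e i)) = ?x" using h Act Aj by (simp add: MH_def)
      have oi: "onm i ?a" using onA ji iE by simp
      have vi: "Val (S i) ?a = Num ?x" using aV[of i] ji i less_imp_le by simp
      show False
      proof (cases "ekind (e i) = KAdd")
        case True
        then obtain pp where pp: "rf Tl (Nxt (S i)) Hd pp" "pp \<noteq> Tl"
           "nless (Val (S i) pp) (Num ?x)" "nle (Num ?x) (Val (S i) (Nxt (S i) pp))"
           "Val (S i) (Nxt (S i) pp) \<noteq> Num ?x"
          using step_ins[OF stp[OF i]] opB xe by metis
        have "nle (Val (S i) (Nxt (S i) pp)) (Val (S i) ?a)"
          using sorted_main[OF nrm[OF i] HT pp(1) _ pp(2), of ?a] oi pp(3) vi unfolding onm_def by simp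
        then show False using pp(4,5) vi nle_antisym by metis
      next
        case False
        then have "ekind (e i) = KRem" using opB by simp
        then show False using step_remC0[OF stp[OF i]] opB xe oi vi unfolding onm_def by metis
      qed
    next
      case (CntEx b r)
      have ce: "is_cnt_exec e n b r" and rE: "EB = r" using BE CntEx EB by (auto simp: MH_def)
      note cf = cnt_facts[OF ce]
      have jb: "j < b" using h Aj CntEx by (simp add: MH_def evless_def)
      have c0: "echi (e r) = C0" using h CntEx by (auto simp: MH_def Op_def)
      have xe: "?x = Xp (S b) (eproc (e b))" using h CntEx Aj by (simp add: MH_def)
      let ?p = "eproc (e b)" let ?c = "Curr (S r) ?p"
      have onA': "\<forall>u. b \<le> u \<longrightarrow> u \<le> r \<longrightarrow> onm u ?a" using onA jb rE by auto
      have r: "enat r < n" using cf by simp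
      have rle: "enat r \<le> n" using r by (simp add: less_imp_le)
      have le1: "nle (Val (S r) ?c) (Num (Xp (S b) ?p))"
        using trav_B[OF ce ia jb onA' xe] cf by simp
      have K: "PC (S r) ?p = P35 \<and> echi (e r) = (if Val (S r) ?c = Num (Xp (S r) ?p) then C1 else C0)"
        using step_KL35[OF stp[OF r]] cf by simp
      have le2: "nle (Num (Xp (S r) ?p)) (Val (S r) ?c)" using SI_at[OF rle, of ?p] K by blast
      have xr: "Xp (S r) ?p = Xp (S b) ?p" using trav_Xp[OF ce, of r] cf by simp
      have "Val (S r) ?c = Num (Xp (S r) ?p)" using le1 le2 xr nle_antisym by metis
      then show False using K c0 by simp
    qed
  qed
qed

end

theorem theorem4p9:
  fixes Hd Tl :: 'a
    and S :: "nat \<Rightarrow> ('a, 'p) st"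
    and e :: "nat \<Rightarrow> ('a, 'p) label"
    and n :: enat
  assumes "countable (UNIV :: 'a set)" and "infinite (UNIV :: 'a set)" and "Hd \<noteq> Tl"
    and "history Hd Tl S e n"
  shows "A0 (MH S e n) \<and> A1 (MH S e n) \<and> A2 (MH S e n)"
proof -
  interpret hist Hd Tl S e n using assms(3,4) by unfold_locales
  show ?thesis using A0_MH A1_MH A2_MH by blast
qed


end
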